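(* Let $U$ be a finite nonempty set, $R$ an equivalence relation on $U$, and $M(R)$ the support matroid induced by $R$. For every $X\subseteq U$, $X$ is a closed set of $M(R)$ if and only if $X$ is an $R$-precise set.
   Context: For $x\in U$, $RN(x)=\{y\in U\mid xRy\}$; $R_{*}(X)=\{x\in U\mid RN(x)\subseteq X\}$ and $R^{*}(X)=\{x\in U\mid RN(x)\cap X\neq\emptyset\}$. A set $X\subseteq U$ is $R$-precise if $R^{*}(X)=R_{*}(X)$, and $R$-rough otherwise. Let $\mathbf{S}(R)=\{X\subseteq U\mid R^{*}(X)=U\}$. The support matroid $M(R)=(U,\mathbf{I}(R))$ is the matroid on $U$ whose independent sets $\mathbf{I}(R)$ are the subsets of inclusion-minimal members of $\mathbf{S}(R)$. For a matroid $(U,\mathbf{I})$, the rank is $r(X)=\max\{|I|\mid I\subseteq X, I\in\mathbf{I}\}$, the closure is $cl(X)=\{e\in U\mid r(X)=r(X\cup\{e\})\}$, and $X$ is closed if $cl(X)=X$. *)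

theory Defs
  imports Main
begin

definition RN :: "'a set \<Rightarrow> 'a rel \<Rightarrow> 'a \<Rightarrow> 'a set" where
  "RN U R x = {y \<in> U. (x, y) \<in> R}"

definition lower_approx :: "'a set \<Rightarrow> 'a rel \<Rightarrow> 'a set \<Rightarrow> 'a set" where
  "lower_approx U R X = {x \<in> U. RN U R x \<subseteq> X}"

definition upper_approx :: "'a set \<Rightarrow> 'a rel \<Rightarrow> 'a set \<Rightarrow> 'a set" where
  "upper_approx U R X = {x \<in> U. RN U R x \<inter> X \<noteq> {}}"

definition R_precise :: "'a set \<Rightarrow> 'a rel \<Rightarrow> 'a set \<Rightarrow> bool" where
  "R_precise U R X \<longleftrightarrow> upper_approx U R X = lower_approx U R X"

definition support_sets :: "'a set \<Rightarrow> 'a rel \<Rightarrow> 'a set set" where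
  "support_sets U R = {X. X \<subseteq> U \<and> upper_approx U R X = U}"

definition minimal_support_sets :: "'a set \<Rightarrow> 'a rel \<Rightarrow> 'a set set" where
  "minimal_support_sets U R =
     {X \<in> support_sets U R. \<forall>Y \<in> support_sets U R. Y \<subseteq> X \<longrightarrow> Y = X}"

definition support_indep :: "'a set \<Rightarrow> 'a rel \<Rightarrow> 'a set set" where
  "support_indep U R = {I. \<exists>B \<in> minimal_support_sets U R. I \<subseteq> B}"

definition mat_rank :: "'a set set \<Rightarrow> 'a set \<Rightarrow> nat" where
  "mat_rank Ind X = Max {card I | I. I \<subseteq> X \<and> I \<in> Ind}"

definition mat_closure :: "'a set \<Rightarrow> 'a set set \<Rightarrow> 'a set \<Rightarrow> 'a set" where
  "mat_closure U Ind X = {e \<in> U. mat_rank Ind X = mat_rank Ind (X \<union> {e})}"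

definition mat_closed :: "'a set \<Rightarrow> 'a set set \<Rightarrow> 'a set \<Rightarrow> bool" where
  "mat_closed U Ind X \<longleftrightarrow> mat_closure U Ind X = X"

end

theory Submission
  imports Defs
begin

definition ptr :: "'a set \<Rightarrow> 'a rel \<Rightarrow> 'a set \<Rightarrow> bool" where
  "ptr U R I \<longleftrightarrow> I \<subseteq> U \<and> (\<forall>a\<in>I. \<forall>b\<in>I. (a,b)\<in>R \<longrightarrow> a = b)"

lemma ind_to_ptr:
  assumes eq: "equiv U R" and I: "I \<in> support_indep U R"
  shows "ptr U R I"
proof -
  from I obtain B where B: "B \<in> minimal_support_sets U R" "I \<subseteq> B"
    unfolding support_indep_def by blast
  have BU: "B \<subseteq> U" and Bs: "upper_approx U R B = U"
    and Bm: "\<And>Y. Y \<in> support_sets U R \<Longrightarrow> Y \<subseteq> B \<Longrightarrow> Y = B"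
    using B(1) unfolding minimal_support_sets_def support_sets_def by auto
  have "\<forall>a\<in>B. \<forall>b\<in>B. (a,b)\<in>R \<longrightarrow> a = b"
  proof (intro ballI impI, rule ccontr)
    fix a b assume ab: "a \<in> B" "b \<in> B" "(a,b) \<in> R" "a \<noteq> b"
    let ?Y = "B - {a}"
    have "upper_approx U R ?Y = U"
    proof
      show "upper_approx U R ?Y \<subseteq> U" unfolding upper_approx_def by auto
      show "U \<subseteq> upper_approx U R ?Y"
      proof
        fix x assume x: "x \<in> U"
        then have "x \<in> upper_approx U R B" using Bs by simp
        then obtain c where c: "c \<in> U" "(x,c) \<in> R" "c \<in> B"
          unfolding upper_approx_def RN_def by auto
        show "x \<in> upper_approx U R ?Y"
        proof (cases "c = a")
          case True
          then have "(x,b) \<in> R" using c ab eq unfolding equiv_def trans_def by blast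
          then show ?thesis using x ab BU unfolding upper_approx_def RN_def by auto
        next
          case False
          then show ?thesis using x c unfolding upper_approx_def RN_def by auto
        qed
      qed
    qed
    then have "?Y \<in> support_sets U R" using BU unfolding support_sets_def by auto
    then have "?Y = B" using Bm by auto
    then show False using ab by auto
  qed
  then show ?thesis using B(2) BU unfolding ptr_def by blast
qed

lemma ptr_to_ind:
  assumes eq: "equiv U R" and P: "ptr U R I"
  shows "I \<in> support_indep U R"
proof -
  have RU: "R \<subseteq> U \<times> U" and refl: "\<And>x. x \<in> U \<Longrightarrow> (x,x) \<in> R"
    and sym: "\<And>x y. (x,y) \<in> R \<Longrightarrow> (y,x) \<in> R"
    and tr: "\<And>x y z. (x,y) \<in> R \<Longrightarrow> (y,z) \<in> R \<Longrightarrow> (x,z) \<in> R"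
    using eq unfolding equiv_def refl_on_def sym_def trans_def by blast+
  define rep where "rep y = (SOME z. z \<in> R``{y})" for y
  have rep1: "y \<in> U \<Longrightarrow> (y, rep y) \<in> R" for y
    unfolding rep_def using refl by (metis Image_singleton_iff someI)
  have rep2: "(y, y') \<in> R \<Longrightarrow> rep y = rep y'" for y y'
  proof -
    assume "(y,y') \<in> R"
    then have "R``{y} = R``{y'}" using eq equiv_class_eq by metis
    then show ?thesis unfolding rep_def by simp
  qed
  define B where "B = I \<union> {rep y | y. y \<in> U \<and> (\<forall>i\<in>I. (y,i) \<notin> R)}"
  have IU: "I \<subseteq> U" using P unfolding ptr_def by auto
  have BU: "B \<subseteq> U" unfolding B_def using IU rep1 RU by blast
  have Bp: "\<And>a b. a \<in> B \<Longrightarrow> b \<in> B \<Longrightarrow> (a,b) \<in> R \<Longrightarrow> a = b"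
  proof -
    fix a b assume a: "a \<in> B" and b: "b \<in> B" and ab: "(a,b) \<in> R"
    show "a = b"
    proof (cases "a \<in> I")
      case aI: True
      show ?thesis
      proof (cases "b \<in> I")
        case True then show ?thesis using aI ab P unfolding ptr_def by blast
      next
        case False
        then obtain y where y: "b = rep y" "y \<in> U" "\<forall>i\<in>I. (y,i) \<notin> R"
          using b unfolding B_def by blast
        have "(y,a) \<in> R" using rep1[OF y(2)] y(1) ab sym tr by blast
        then show ?thesis using y aI by blast
      qed
    next
      case aI: False
      then obtain y where y: "a = rep y" "y \<in> U" "\<forall>i\<in>I. (y,i) \<notin> R"
        using a unfolding B_def by blast
      show ?thesis
      proof (cases "b \<in> I")
        case True
        have "(y,b) \<in> R" using rep1[OF y(2)] y(1) ab tr by blast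
        then show ?thesis using y True by blast
      next
        case False
        then obtain y' where y': "b = rep y'" "y' \<in> U"
          using b unfolding B_def by blast
        have "(y,y') \<in> R" using rep1[OF y(2)] rep1[OF y'(2)] y(1) y'(1) ab sym tr by blast
        then show ?thesis using rep2 y(1) y'(1) by simp
      qed
    qed
  qed
  have Bs: "upper_approx U R B = U"
  proof
    show "upper_approx U R B \<subseteq> U" unfolding upper_approx_def by auto
    show "U \<subseteq> upper_approx U R B"
    proof
      fix x assume x: "x \<in> U"
      show "x \<in> upper_approx U R B"
      proof (cases "\<exists>i\<in>I. (x,i) \<in> R")
        case True
        then obtain i where "i \<in> I" "(x,i) \<in> R" by blast
        then show ?thesis using x IU unfolding upper_approx_def RN_def B_def by blast
      next
        case False
        then have "rep x \<in> B" using x unfolding B_def by blast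
        then show ?thesis using x rep1[OF x] BU unfolding upper_approx_def RN_def by blast
      qed
    qed
  qed
  have "B \<in> minimal_support_sets U R"
    unfolding minimal_support_sets_def
  proof (intro CollectI conjI ballI impI)
    show "B \<in> support_sets U R" using BU Bs unfolding support_sets_def by auto
    fix Y assume Y: "Y \<in> support_sets U R" "Y \<subseteq> B"
    have "B \<subseteq> Y"
    proof
      fix b assume b: "b \<in> B"
      then have "b \<in> U" using BU by auto
      then have "b \<in> upper_approx U R Y" using Y(1) unfolding support_sets_def by auto
      then obtain c where c: "c \<in> Y" "(b,c) \<in> R" unfolding upper_approx_def RN_def by auto
      then have "b = c" using Bp b Y(2) by blast
      then show "b \<in> Y" using c by simp
    qed
    then show "Y = B" using Y by auto
  qed
  moreover have "I \<subseteq> B" unfolding B_def by auto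
  ultimately show ?thesis unfolding support_indep_def by blast
qed

lemma ind_eq:
  assumes "equiv U R"
  shows "support_indep U R = {I. ptr U R I}"
  using ind_to_ptr[OF assms] ptr_to_ind[OF assms] by blast

lemma rank_fin:
  assumes "finite X"
  shows "finite {card I | I. I \<subseteq> X \<and> I \<in> Ind}"
proof -
  have "{card I | I. I \<subseteq> X \<and> I \<in> Ind} \<subseteq> card ` Pow X" by auto
  then show ?thesis using assms finite_subset by blast
qed

lemma rank_ge:
  assumes "finite X" "I \<subseteq> X" "I \<in> Ind"
  shows "card I \<le> mat_rank Ind X"
  unfolding mat_rank_def using assms rank_fin[OF assms(1), of Ind] by (intro Max_ge) auto

lemma rank_obtain:
  assumes "finite X" "{} \<in> Ind"
  obtains I where "I \<subseteq> X" "I \<in> Ind" "card I = mat_rank Ind X"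
proof -
  have ne: "{card I | I. I \<subseteq> X \<and> I \<in> Ind} \<noteq> {}" using assms by auto
  have "mat_rank Ind X \<in> {card I | I. I \<subseteq> X \<and> I \<in> Ind}"
    unfolding mat_rank_def using Max_in[OF rank_fin[OF assms(1)] ne] .
  then show ?thesis using that by auto
qed

theorem corollary4:
  fixes U :: "'a set" and R :: "'a rel" and X :: "'a set"
  assumes "finite U" and "U \<noteq> {}" and "equiv U R" and "X \<subseteq> U"
  shows "mat_closed U (support_indep U R) X \<longleftrightarrow> R_precise U R X"
proof -
  note eq = assms(3)
  have RU: "R \<subseteq> U \<times> U" and refl: "\<And>x. x \<in> U \<Longrightarrow> (x,x) \<in> R"
    and sym: "\<And>x y. (x,y) \<in> R \<Longrightarrow> (y,x) \<in> R"
    and tr: "\<And>x y z. (x,y) \<in> R \<Longrightarrow> (y,z) \<in> R \<Longrightarrow> (x,z) \<in> R"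
    using eq unfolding equiv_def refl_on_def sym_def trans_def by blast+
  let ?Ind = "support_indep U R"
  have IE: "?Ind = {I. ptr U R I}" using ind_eq[OF eq] .
  have fX: "finite X" using assms(1,4) finite_subset by blast
  have empty: "{} \<in> ?Ind" using IE unfolding ptr_def by auto
  have cl: "mat_closure U ?Ind X = upper_approx U R X"
  proof (rule set_eqI)
    fix e
    show "e \<in> mat_closure U ?Ind X \<longleftrightarrow> e \<in> upper_approx U R X"
    proof (cases "e \<in> U")
      case False then show ?thesis unfolding mat_closure_def upper_approx_def by auto
    next
      case eU: True
      have fXe: "finite (X \<union> {e})" using fX by auto
      show ?thesis
      proof (cases "\<exists>x\<in>X. (e,x) \<in> R")
        case True
        then obtain x where x: "x \<in> X" "(e,x) \<in> R" by blast
        obtain I where I: "I \<subseteq> X \<union> {e}" "I \<in> ?Ind" "card I = mat_rank ?Ind (X \<union> {e})"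
          using rank_obtain[OF fXe empty] by blast
        have "mat_rank ?Ind (X \<union> {e}) \<le> mat_rank ?Ind X"
        proof (cases "e \<in> I")
          case False
          then have "I \<subseteq> X" using I by auto
          then show ?thesis using rank_ge[OF fX _ I(2)] I(3) by simp
        next
          case eI: True
          show ?thesis
          proof (cases "x \<in> I")
            case True
            then have "x = e" using eI x IE I(2) sym unfolding ptr_def by blast
            then have "I \<subseteq> X" using I x by auto
            then show ?thesis using rank_ge[OF fX _ I(2)] I(3) by simp
          next
            case xI: False
            let ?J = "insert x (I - {e})"
            have fI: "finite I" using I(1) fXe finite_subset by blast
            have c1: "card (I - {e}) = card I - 1" using eI fI by (simp add: card_Diff_singleton)
            have c2: "card I > 0" using eI fI card_gt_0_iff by blast
            have cJ: "card ?J = card I" using xI fI c1 c2 by simp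
            have "ptr U R ?J"
              unfolding ptr_def
            proof (intro conjI ballI impI)
              show "?J \<subseteq> U" using x assms(4) I(2) IE unfolding ptr_def by auto
              fix a b assume a: "a \<in> ?J" and b: "b \<in> ?J" and ab: "(a,b) \<in> R"
              have Pi: "\<And>a b. a \<in> I \<Longrightarrow> b \<in> I \<Longrightarrow> (a,b) \<in> R \<Longrightarrow> a = b"
                using I(2) IE unfolding ptr_def by blast
              have xe: "(x,e) \<in> R" using x sym by blast
              show "a = b"
              proof (cases "a = x")
                case ax: True
                show ?thesis
                proof (cases "b = x")
                  case True then show ?thesis using ax by simp
                next
                  case False
                  then have bI: "b \<in> I" "b \<noteq> e" using b by auto
                  have "(e,b) \<in> R" using tr[OF x(2)] ab ax by simp
                  then show ?thesis using Pi[OF eI bI(1)] bI(2) by simp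
                qed
              next
                case anx: False
                then have aI: "a \<in> I" "a \<noteq> e" using a by auto
                show ?thesis
                proof (cases "b = x")
                  case True
                  have "(a,e) \<in> R" using tr[OF _ xe] ab True by simp
                  then show ?thesis using Pi[OF aI(1) eI] aI(2) by simp
                next
                  case False
                  then have "b \<in> I" using b by auto
                  then show ?thesis using Pi[OF aI(1)] ab by simp
                qed
              qed
            qed
            then have "?J \<in> ?Ind" using IE by simp
            moreover have "?J \<subseteq> X" using I(1) x by auto
            ultimately have "card ?J \<le> mat_rank ?Ind X" by (rule rank_ge[OF fX, rotated])
            then show ?thesis using I(3) cJ by linarith
          qed
        qed
        moreover have "mat_rank ?Ind X \<le> mat_rank ?Ind (X \<union> {e})"
        proof -
          obtain I where "I \<subseteq> X" "I \<in> ?Ind" "card I = mat_rank ?Ind X"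
            using rank_obtain[OF fX empty] by blast
          moreover have "I \<subseteq> X \<union> {e}" using calculation(1) by blast
          ultimately show ?thesis using rank_ge[OF fXe, of I ?Ind] by linarith
        qed
        moreover have "e \<in> upper_approx U R X"
          using eU x assms(4) unfolding upper_approx_def RN_def by blast
        ultimately show ?thesis using eU unfolding mat_closure_def by simp
      next
        case False
        obtain I where I: "I \<subseteq> X" "I \<in> ?Ind" "card I = mat_rank ?Ind X"
          using rank_obtain[OF fX empty] by blast
        have eX: "e \<notin> X" using False refl[OF eU] by auto
        have fI: "finite I" using I(1) fX finite_subset by blast
        have PI: "ptr U R I" using I(2) IE by simp
        have "ptr U R (insert e I)"
          unfolding ptr_def
        proof (intro conjI ballI impI)
          show "insert e I \<subseteq> U" using PI eU unfolding ptr_def by simp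
          fix a b assume a: "a \<in> insert e I" and b: "b \<in> insert e I" and ab: "(a,b) \<in> R"
          show "a = b"
          proof (cases "a = e")
            case True
            then show ?thesis using b ab False I(1) by auto
          next
            case ae: False
            show ?thesis
            proof (cases "b = e")
              case True
              then have "(e,a) \<in> R" using ab sym by simp
              then show ?thesis using a ae False I(1) by auto
            next
              case False
              then show ?thesis using a b ae ab PI unfolding ptr_def by auto
            qed
          qed
        qed
        then have "insert e I \<in> ?Ind" using IE by simp
        then have "card (insert e I) \<le> mat_rank ?Ind (X \<union> {e})"
          using rank_ge[OF fXe, of "insert e I"] I(1) by auto
        moreover have "e \<notin> I" using eX I(1) by blast
        then have "card (insert e I) = Suc (card I)" using fI by simp
        ultimately have "mat_rank ?Ind X \<noteq> mat_rank ?Ind (X \<union> {e})" using I(3) by linarith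
        moreover have "e \<notin> upper_approx U R X"
          using False unfolding upper_approx_def RN_def by blast
        ultimately show ?thesis unfolding mat_closure_def by simp
      qed
    qed
  qed
  have lowX: "lower_approx U R X \<subseteq> X"
    unfolding lower_approx_def RN_def using refl by blast
  have Xup: "X \<subseteq> upper_approx U R X"
    unfolding upper_approx_def RN_def using refl assms(4) by blast
  have "upper_approx U R X = X \<longleftrightarrow> R_precise U R X"
  proof
    assume "R_precise U R X"
    then show "upper_approx U R X = X" using lowX Xup unfolding R_precise_def by blast
  next
    assume up: "upper_approx U R X = X"
    have "upper_approx U R X \<subseteq> lower_approx U R X"
    proof
      fix x assume x: "x \<in> upper_approx U R X"
      then obtain z where z: "z \<in> X" "(x,z) \<in> R" unfolding upper_approx_def RN_def by blast
      have "RN U R x \<subseteq> X"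
      proof
        fix y assume "y \<in> RN U R x"
        then have y: "y \<in> U" "(x,y) \<in> R" unfolding RN_def by auto
        have "(y,z) \<in> R" using y z sym tr by blast
        then have "y \<in> upper_approx U R X" using y z assms(4) unfolding upper_approx_def RN_def by blast
        then show "y \<in> X" using up by simp
      qed
      then show "x \<in> lower_approx U R X" using x unfolding upper_approx_def lower_approx_def by auto
    qed
    then show "R_precise U R X" using lowX Xup up unfolding R_precise_def by blast
  qed
  then show ?thesis unfolding mat_closed_def cl .
qed

end
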